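(* Let $G$ and $H$ be finite simple connected graphs and let $L$ be a non-empty proper subset of $V(G)$. Let $T$ be a non-empty cutset of $G\circ_L H$, and write $T=T_0\cup\bigcup_{v\in L}T_v$ with $T_0\subseteq V(G)$ and $T_v\subseteq V(H_v)$ for all $v\in L$. Then: (1) $\emptyset\neq T_0\subsetneq V(G)$. (2) If $v\in L\setminus T_0$, then $T_v=\emptyset$. (3) If $v\in T_0$ (and $v\in L$), then either $T_v=\emptyset$ or $T_v\in\mathscr{C}(H_v)$. (4) If $v\in L\cap T_0$ and $N_G(v)\subseteq T_0$, then $T_v\neq\emptyset$. (5) With $N:=\{v\in L : T_v\neq\emptyset\}$, $$\omega\big((G\circ_L H)\setminus T\big)=\omega(G\setminus T_0)+\sum_{v\in N}\omega(H_v\setminus T_v)+|T_0\cap L|-|N|.$$ (6) Every simplicial vertex of $G$ lying in $T_0$ belongs to $L$. (7) If $T_0\cap L=\emptyset$, then $T=T_0\in\mathscr{C}(G)$ and $T_0$ contains no simplicial vertex of $G$.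
   Context: All graphs are finite and simple. For a graph $\Gamma$ and $A\subseteq V(\Gamma)$, $\Gamma\setminus A$ is the induced subgraph on $V(\Gamma)\setminus A$ and $\omega(\Gamma\setminus A)$ is its number of connected components. A subset $T\subseteq V(\Gamma)$ is a cutset if $T=\emptyset$ or, for every $v\in T$, $\omega(\Gamma\setminus (T\setminus\{v\}))<\omega(\Gamma\setminus T)$; $\mathscr{C}(\Gamma)$ is the set of cutsets. $N_G(v)$ is the set of neighbours of $v$ in $G$. A vertex is simplicial if it belongs to exactly one maximal clique. For a non-empty $L\subseteq V(G)$, $G\circ_L H$ is the graph obtained from $G$ by taking, for each $v\in L$, a disjoint copy $H_v$ of $H$ and joining $v$ to every vertex of $H_v$. *)

theory Defs
  imports Main
begin

text \<open>A graph is a pair (vertex set, edge set); edges are ordered pairs, stored symmetrically.\<close>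
type_synonym 'a graph = "'a set \<times> ('a \<times> 'a) set"

definition verts :: "'a graph \<Rightarrow> 'a set" where "verts G = fst G"
definition edges :: "'a graph \<Rightarrow> ('a \<times> 'a) set" where "edges G = snd G"

definition simple_graph :: "'a graph \<Rightarrow> bool" where
  "simple_graph G \<longleftrightarrow> finite (verts G) \<and> edges G \<subseteq> verts G \<times> verts G
     \<and> sym (edges G) \<and> irrefl (edges G)"

definition delete :: "'a graph \<Rightarrow> 'a set \<Rightarrow> 'a graph" where
  "delete G A = (verts G - A, edges G \<inter> ((verts G - A) \<times> (verts G - A)))"

definition components :: "'a graph \<Rightarrow> 'a set set" where
  "components G = {{y \<in> verts G. (x, y) \<in> (edges G)\<^sup>*} | x. x \<in> verts G}"

definition omega :: "'a graph \<Rightarrow> nat" where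
  "omega G = card (components G)"

definition connected_graph :: "'a graph \<Rightarrow> bool" where
  "connected_graph G \<longleftrightarrow> verts G \<noteq> {} \<and> omega G = 1"

definition is_cutset :: "'a graph \<Rightarrow> 'a set \<Rightarrow> bool" where
  "is_cutset G T \<longleftrightarrow> T \<subseteq> verts G \<and>
     (T = {} \<or> (\<forall>v\<in>T. omega (delete G (T - {v})) < omega (delete G T)))"

definition neighbours :: "'a graph \<Rightarrow> 'a \<Rightarrow> 'a set" where
  "neighbours G v = {u. (v, u) \<in> edges G}"

definition is_clique :: "'a graph \<Rightarrow> 'a set \<Rightarrow> bool" where
  "is_clique G C \<longleftrightarrow> C \<subseteq> verts G \<and> (\<forall>x\<in>C. \<forall>y\<in>C. x \<noteq> y \<longrightarrow> (x, y) \<in> edges G)"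

definition is_max_clique :: "'a graph \<Rightarrow> 'a set \<Rightarrow> bool" where
  "is_max_clique G C \<longleftrightarrow> is_clique G C \<and> (\<forall>D. is_clique G D \<and> C \<subseteq> D \<longrightarrow> D = C)"

definition simplicial :: "'a graph \<Rightarrow> 'a \<Rightarrow> bool" where
  "simplicial G v \<longleftrightarrow> v \<in> verts G \<and> (\<exists>!C. is_max_clique G C \<and> v \<in> C)"

text \<open>The copy H_v of H attached at v, with vertices Inr (v, w).\<close>
definition hcopy :: "'a \<Rightarrow> 'b graph \<Rightarrow> ('a + 'a \<times> 'b) graph" where
  "hcopy v H = ((\<lambda>w. Inr (v, w)) ` verts H,
                (\<lambda>(w, w'). (Inr (v, w), Inr (v, w'))) ` edges H)"

definition gcopy :: "'a graph \<Rightarrow> ('a + 'a \<times> 'b) graph" where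
  "gcopy G = (Inl ` verts G, (\<lambda>(u, u'). (Inl u, Inl u')) ` edges G)"

definition corona :: "'a graph \<Rightarrow> 'a set \<Rightarrow> 'b graph \<Rightarrow> ('a + 'a \<times> 'b) graph" where
  "corona G L H =
    (verts (gcopy G) \<union> (\<Union>v\<in>L. verts (hcopy v H)),
     edges (gcopy G) \<union> (\<Union>v\<in>L. edges (hcopy v H))
       \<union> {(Inl v, Inr (v, w)) | v w. v \<in> L \<and> w \<in> verts H}
       \<union> {(Inr (v, w), Inl v) | v w. v \<in> L \<and> w \<in> verts H})"

end

theory Submission
  imports Defs
begin


lemma verts_delete[simp]: "verts (delete G A) = verts G - A"
  by (simp add: delete_def verts_def)
lemma edges_delete[simp]: "edges (delete G A) = edges G \<inter> ((verts G - A) \<times> (verts G - A))"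
  by (simp add: delete_def verts_def edges_def)

lemma components_sub: "C \<in> components G \<Longrightarrow> C \<subseteq> verts G"
  by (auto simp: components_def)

lemma components_ne: "C \<in> components G \<Longrightarrow> C \<noteq> {}"
  by (auto simp: components_def)

lemma components_cover: "x \<in> verts G \<Longrightarrow> \<exists>C\<in>components G. x \<in> C"
  by (auto simp: components_def)

lemma components_closed:
  "C \<in> components G \<Longrightarrow> x \<in> C \<Longrightarrow> (x,y) \<in> edges G \<Longrightarrow> y \<in> verts G \<Longrightarrow> y \<in> C"
  unfolding components_def by (auto intro: rtrancl_into_rtrancl)

lemma sym_rtr: "sym E \<Longrightarrow> (x,y) \<in> E\<^sup>* \<Longrightarrow> (y,x) \<in> E\<^sup>*"
  by (metis rtrancl_converseI sym_conv_converse_eq)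

lemma components_conn:
  assumes "sym (edges G)" "C \<in> components G" "x \<in> C" "y \<in> C"
  shows "(x,y) \<in> (edges G)\<^sup>*"
proof -
  obtain r where "C = {y \<in> verts G. (r, y) \<in> (edges G)\<^sup>*}"
    using assms(2) by (auto simp: components_def)
  then have "(r,x) \<in> (edges G)\<^sup>*" "(r,y) \<in> (edges G)\<^sup>*" using assms by auto
  then show ?thesis using sym_rtr[OF assms(1)] by (meson rtrancl_trans)
qed

lemma finite_components: "finite (verts G) \<Longrightarrow> finite (components G)"
  by (rule finite_subset[of _ "Pow (verts G)"]) (auto dest: components_sub)

lemma root_conn:
  assumes "sym E" "\<forall>y\<in>B. (r,y) \<in> E\<^sup>*" "x \<in> B" "y \<in> B"
  shows "(x,y) \<in> E\<^sup>*"
  using assms sym_rtr[OF assms(1)] by (meson rtrancl_trans)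

lemma components_eqI:
  assumes cov: "\<Union>P = verts G" and ne: "\<forall>B\<in>P. B \<noteq> {}"
    and conn: "\<forall>B\<in>P. \<forall>x\<in>B. \<forall>y\<in>B. (x,y) \<in> (edges G)\<^sup>*"
    and clo: "\<forall>B\<in>P. \<forall>x\<in>B. \<forall>y. (x,y) \<in> edges G \<longrightarrow> y \<in> B"
  shows "components G = P"
proof -
  have reach: "{y \<in> verts G. (x, y) \<in> (edges G)\<^sup>*} = B" if "B \<in> P" "x \<in> B" for B x
  proof
    show "{y \<in> verts G. (x, y) \<in> (edges G)\<^sup>*} \<subseteq> B"
    proof clarify
      fix y assume "(x,y) \<in> (edges G)\<^sup>*"
      then show "y \<in> B"
        by (induct rule: rtrancl_induct) (use that clo in blast)+
    qed
    show "B \<subseteq> {y \<in> verts G. (x, y) \<in> (edges G)\<^sup>*}"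
      using that conn cov by blast
  qed
  show ?thesis
  proof
    show "components G \<subseteq> P"
    proof
      fix C assume "C \<in> components G"
      then obtain x where x: "x \<in> verts G" "C = {y \<in> verts G. (x, y) \<in> (edges G)\<^sup>*}"
        by (auto simp: components_def)
      then obtain B where "B \<in> P" "x \<in> B" using cov by blast
      then show "C \<in> P" using reach x by simp
    qed
    show "P \<subseteq> components G"
    proof
      fix B assume B: "B \<in> P"
      then obtain x where "x \<in> B" using ne by blast
      then have "x \<in> verts G" "B = {y \<in> verts G. (x, y) \<in> (edges G)\<^sup>*}"
        using reach B cov by auto
      then show "B \<in> components G" by (auto simp: components_def)
    qed
  qed
qed

lemma sym_delete: "sym (edges G) \<Longrightarrow> sym (edges (delete G A))"
  by (auto simp: sym_def)

lemma delete_empty: "simple_graph G \<Longrightarrow> delete G {} = G"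
  by (cases G) (auto simp: delete_def simple_graph_def verts_def edges_def)

lemma omega_delete_all: "omega (delete G (verts G)) = 0"
  by (simp add: omega_def components_def)

lemma rtr_map:
  assumes "(a,b) \<in> R\<^sup>*" "\<forall>p q. (p,q) \<in> R \<longrightarrow> (f p, f q) \<in> R'"
  shows "(f a, f b) \<in> R'\<^sup>*"
  using assms(1) by (induct rule: rtrancl_induct) (use assms(2) in \<open>auto intro: rtrancl_into_rtrancl\<close>)




lemma sumprod_cases: "(\<And>u. x = Inl u \<Longrightarrow> P) \<Longrightarrow> (\<And>v w. x = Inr (v,w) \<Longrightarrow> P) \<Longrightarrow> P"
  by (cases x) auto

lemma hcopy_verts[simp]:
  "Inl u \<notin> verts (hcopy v H)"
  "Inr (v',w) \<in> verts (hcopy v H) \<longleftrightarrow> v' = v \<and> w \<in> verts H"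
  by (auto simp: hcopy_def verts_def)

lemma hcopy_edges[simp]:
  "(Inl u, y) \<notin> edges (hcopy v H)"
  "(y, Inl u) \<notin> edges (hcopy v H)"
  "(Inr (a,b), Inr (c,d)) \<in> edges (hcopy v H) \<longleftrightarrow> a = v \<and> c = v \<and> (b,d) \<in> edges H"
  by (auto simp: hcopy_def edges_def)

lemma corona_verts[simp]:
  "Inl u \<in> verts (corona G L H) \<longleftrightarrow> u \<in> verts G"
  "Inr (v,w) \<in> verts (corona G L H) \<longleftrightarrow> v \<in> L \<and> w \<in> verts H"
  by (auto simp: corona_def gcopy_def verts_def hcopy_def)

lemma corona_edges[simp]:
  "(Inl u, Inl u') \<in> edges (corona G L H) \<longleftrightarrow> (u,u') \<in> edges G"
  "(Inl u, Inr (v,w)) \<in> edges (corona G L H) \<longleftrightarrow> u = v \<and> v \<in> L \<and> w \<in> verts H"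
  "(Inr (v,w), Inl u) \<in> edges (corona G L H) \<longleftrightarrow> u = v \<and> v \<in> L \<and> w \<in> verts H"
  "(Inr (v,w), Inr (v',w')) \<in> edges (corona G L H) \<longleftrightarrow> v' = v \<and> v \<in> L \<and> (w,w') \<in> edges H"
  by (auto simp: corona_def gcopy_def edges_def verts_def hcopy_def)

lemma sym_hcopy: "sym (edges H) \<Longrightarrow> sym (edges (hcopy v H))"
  unfolding sym_def
  apply clarify
  subgoal for x y by (rule sumprod_cases[of x]; rule sumprod_cases[of y]; auto)
  done

lemma sym_corona: "sym (edges G) \<Longrightarrow> sym (edges H) \<Longrightarrow> sym (edges (corona G L H))"
  unfolding sym_def
  apply clarify
  subgoal for x y by (rule sumprod_cases[of x]; rule sumprod_cases[of y]; auto)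
  done




lemma omega_corona:
  assumes sG: "simple_graph G" and sH: "simple_graph H" and LG: "L \<subseteq> verts G"
  shows "omega (delete (corona G L H) S) = omega (delete G {u \<in> verts G. Inl u \<in> S})
     + (\<Sum>v\<in>L \<inter> {u \<in> verts G. Inl u \<in> S}. omega (delete (hcopy v H) (S \<inter> verts (hcopy v H))))"
proof -
  define S0 where "S0 = {u \<in> verts G. Inl u \<in> S}"
  define K where "K = corona G L H"
  define D where "D = delete K S"
  define GS where "GS = delete G S0"
  define HS where "HS = (\<lambda>v. delete (hcopy v H) (S \<inter> verts (hcopy v H)))"
  define blk where "blk = (\<lambda>C. Inl ` C \<union> {Inr (v,w) | v w. v \<in> C \<inter> L \<and> w \<in> verts H \<and> Inr (v,w) \<notin> S})"
  define P1 where "P1 = blk ` components GS"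
  define P2 where "P2 = (\<Union>v\<in>L \<inter> S0. components (HS v))"
  have symG: "sym (edges G)" and symH: "sym (edges H)" and fG: "finite (verts G)" and fH: "finite (verts H)"
    using sG sH by (auto simp: simple_graph_def)
  have EG: "edges G \<subseteq> verts G \<times> verts G" and EH: "edges H \<subseteq> verts H \<times> verts H"
    using sG sH by (auto simp: simple_graph_def)
  have symD: "sym (edges D)" unfolding D_def K_def by (rule sym_delete, rule sym_corona[OF symG symH])
  have vD: "x \<in> verts D \<longleftrightarrow> x \<in> verts K \<and> x \<notin> S" for x by (simp add: D_def)
  have eD: "(x,y) \<in> edges D \<longleftrightarrow> (x,y) \<in> edges K \<and> x \<in> verts D \<and> y \<in> verts D" for x y
    by (auto simp: D_def)
  have vGS: "u \<in> verts GS \<longleftrightarrow> u \<in> verts G \<and> u \<notin> S0" for u by (simp add: GS_def)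
  have S0I: "u \<in> verts G \<Longrightarrow> Inl u \<notin> S \<longleftrightarrow> u \<notin> S0" for u by (auto simp: S0_def)
  have vHS: "x \<in> verts (HS v) \<longleftrightarrow> x \<in> verts (hcopy v H) \<and> x \<notin> S" for x v by (auto simp: HS_def)
  have eHS: "(x,y) \<in> edges (HS v) \<longleftrightarrow> (x,y) \<in> edges (hcopy v H) \<and> x \<in> verts (HS v) \<and> y \<in> verts (HS v)" for x y v
    by (auto simp: HS_def)
  have comps: "components D = P1 \<union> P2"
  proof (rule components_eqI)
    show "\<Union>(P1 \<union> P2) = verts D"
    proof (rule equalityI)
      show "\<Union>(P1 \<union> P2) \<subseteq> verts D"
      proof (rule subsetI)
        fix x assume "x \<in> \<Union>(P1 \<union> P2)"
        then consider C where "C \<in> components GS" "x \<in> blk C" | v B where "v \<in> L \<inter> S0" "B \<in> components (HS v)" "x \<in> B"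
          unfolding P1_def P2_def by blast
        then show "x \<in> verts D"
        proof cases
          case 1
          then have "C \<subseteq> verts GS" by (intro components_sub) simp
          with 1 show ?thesis using LG by (auto simp: blk_def vD K_def vGS S0_def)
        next
          case 2
          then have "x \<in> verts (HS v)" using components_sub by blast
          with 2 show ?thesis by (rule_tac sumprod_cases[of x]) (auto simp: vHS vD K_def)
        qed
      qed
      show "verts D \<subseteq> \<Union>(P1 \<union> P2)"
      proof (rule subsetI)
        fix x assume x: "x \<in> verts D"
        show "x \<in> \<Union>(P1 \<union> P2)"
        proof (rule sumprod_cases[of x])
          fix u assume xu: "x = Inl u"
          then have "u \<in> verts GS" using x by (auto simp: vD K_def vGS S0_def)
          then obtain C where "C \<in> components GS" "u \<in> C" by (meson components_cover)
          then show ?thesis using xu by (auto simp: P1_def blk_def)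
        next
          fix v w assume xv: "x = Inr (v,w)"
          then have v: "v \<in> L" "w \<in> verts H" "x \<notin> S" using x by (auto simp: vD K_def)
          show ?thesis
          proof (cases "v \<in> S0")
            case True
            then have "x \<in> verts (HS v)" using v xv by (simp add: vHS)
            then obtain B where "B \<in> components (HS v)" "x \<in> B" by (meson components_cover)
            then show ?thesis using True v by (auto simp: P2_def)
          next
            case False
            then have "v \<in> verts GS" using v LG by (auto simp: vGS)
            then obtain C where "C \<in> components GS" "v \<in> C" by (meson components_cover)
            then show ?thesis using xv v by (auto simp: P1_def blk_def)
          qed
        qed
      qed
    qed
  next
    show "\<forall>B\<in>P1 \<union> P2. B \<noteq> {}"
    proof
      fix B assume "B \<in> P1 \<union> P2"
      then consider C where "C \<in> components GS" "B = blk C" | v where "B \<in> components (HS v)"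
        unfolding P1_def P2_def by blast
      then show "B \<noteq> {}"
      proof cases
        case 1 then show ?thesis using components_ne[OF 1(1)] by (auto simp: blk_def)
      next
        case 2 then show ?thesis by (rule components_ne)
      qed
    qed
  next
    show "\<forall>B\<in>P1 \<union> P2. \<forall>x\<in>B. \<forall>y\<in>B. (x, y) \<in> (edges D)\<^sup>*"
    proof (intro ballI)
      fix B x y assume B: "B \<in> P1 \<union> P2" and x: "x \<in> B" and y: "y \<in> B"
      then consider C where "C \<in> components GS" "B = blk C" | v where "v \<in> L \<inter> S0" "B \<in> components (HS v)"
        unfolding P1_def P2_def by blast
      then show "(x, y) \<in> (edges D)\<^sup>*"
      proof cases
        case 1
        then obtain r where r: "r \<in> C" using components_ne by blast
        have CGS: "C \<subseteq> verts GS" using 1 components_sub by blast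
        have inl: "(Inl r, Inl u) \<in> (edges D)\<^sup>*" if "u \<in> C" for u
        proof -
          have "(r,u) \<in> (edges GS)\<^sup>*"
            using components_conn[OF sym_delete[OF symG] 1(1)[unfolded GS_def] r that] unfolding GS_def .
          moreover have "\<forall>p q. (p,q) \<in> edges GS \<longrightarrow> (Inl p, Inl q) \<in> edges D"
            by (auto simp: GS_def eD vD K_def S0_def)
          ultimately show ?thesis by (rule rtr_map)
        qed
        have "\<forall>z\<in>B. (Inl r, z) \<in> (edges D)\<^sup>*"
        proof
          fix z assume "z \<in> B"
          then consider u where "u \<in> C" "z = Inl u" | v w where "v \<in> C" "v \<in> L" "w \<in> verts H" "Inr (v,w) \<notin> S" "z = Inr (v,w)"
            using 1 unfolding blk_def by blast
          then show "(Inl r, z) \<in> (edges D)\<^sup>*"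
          proof cases
            case 1 then show ?thesis using inl by simp
          next
            case 2
            have "(Inl v, Inr (v,w)) \<in> edges D"
              using 2 CGS by (auto simp: eD vD K_def vGS S0_def)
            then show ?thesis using inl[OF 2(1)] 2 by (auto intro: rtrancl_into_rtrancl)
          qed
        qed
        then show ?thesis using root_conn[OF symD] x y by blast
      next
        case 2
        have "(x,y) \<in> (edges (HS v))\<^sup>*"
          using components_conn[OF sym_delete[OF sym_hcopy[OF symH]] 2(2)[unfolded HS_def] x y] unfolding HS_def .
        moreover have "edges (HS v) \<subseteq> edges D"
        proof clarify
          fix p q assume pq: "(p,q) \<in> edges (HS v)"
          then have "(p,q) \<in> edges (hcopy v H)" "p \<in> verts (HS v)" "q \<in> verts (HS v)" by (auto simp: eHS)
          then show "(p,q) \<in> edges D" using 2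
            by (rule_tac sumprod_cases[of p]; rule_tac sumprod_cases[of q]) (auto simp: eD vD vHS K_def)
        qed
        ultimately show ?thesis by (meson rtrancl_mono subsetD)
      qed
    qed
  next
    show "\<forall>B\<in>P1 \<union> P2. \<forall>x\<in>B. \<forall>y. (x, y) \<in> edges D \<longrightarrow> y \<in> B"
    proof (intro ballI allI impI)
      fix B x y assume B: "B \<in> P1 \<union> P2" and x: "x \<in> B" and xy: "(x,y) \<in> edges D"
      then consider C where "C \<in> components GS" "B = blk C" | v where "v \<in> L \<inter> S0" "B \<in> components (HS v)"
        unfolding P1_def P2_def by blast
      then show "y \<in> B"
      proof cases
        case 1
        have CGS: "C \<subseteq> verts GS" using 1 components_sub by blast
        have clo: "u' \<in> C" if "u \<in> C" "(u,u') \<in> edges G" "u' \<notin> S0" for u u'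
        proof (rule components_closed[OF 1(1) that(1)])
          show "u' \<in> verts GS" using that EG by (auto simp: vGS)
          then show "(u,u') \<in> edges GS" using that CGS by (auto simp: GS_def)
        qed
        have yD: "y \<in> verts D" using xy eD by blast
        show ?thesis
        proof (rule sumprod_cases[of x])
          fix u assume xu: "x = Inl u"
          then have u: "u \<in> C" using x 1(2) by (auto simp: blk_def)
          show ?thesis
          proof (rule sumprod_cases[of y])
            fix u' assume yu: "y = Inl u'"
            have "(u,u') \<in> edges G" using xy xu yu eD K_def by simp
            moreover have "u' \<in> verts G" "Inl u' \<notin> S" using yD yu by (auto simp: vD K_def)
            ultimately have "u' \<in> C" using clo[OF u] S0I by blast
            then show ?thesis using 1(2) yu by (simp add: blk_def)
          next
            fix v w assume yv: "y = Inr (v,w)"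
            have "v = u" "v \<in> L" "w \<in> verts H" using xy xu yv eD K_def by simp_all
            moreover have "y \<notin> S" using yD vD by blast
            ultimately show ?thesis using 1(2) yv u by (auto simp: blk_def)
          qed
        next
          fix v w assume xv: "x = Inr (v,w)"
          then have v: "v \<in> C" "v \<in> L" using x 1(2) by (auto simp: blk_def)
          show ?thesis
          proof (rule sumprod_cases[of y])
            fix u' assume yu: "y = Inl u'"
            have "u' = v" using xy xv yu eD K_def by simp
            then show ?thesis using 1(2) yu v by (simp add: blk_def)
          next
            fix v' w' assume yv: "y = Inr (v',w')"
            have "v' = v" using xy xv yv eD K_def by simp
            moreover have "w' \<in> verts H" "y \<notin> S" using yD yv by (auto simp: vD K_def)
            ultimately show ?thesis using 1(2) yv v by (auto simp: blk_def)
          qed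
        qed
      next
        case 2
        have xv: "x \<in> verts (HS v)" using 2 x components_sub by blast
        have "(x,y) \<in> edges (HS v)"
          using xv xy 2
          by (rule_tac sumprod_cases[of x]; rule_tac sumprod_cases[of y]) (auto simp: eHS eD vD vHS K_def S0_def)
        then show ?thesis using components_closed[OF 2(2) x] by (auto simp: eHS)
      qed
    qed
  qed
  have finGS: "finite (components GS)" using fG by (intro finite_components) (simp add: GS_def)
  have finHS: "finite (components (HS v))" for v
  proof -
    have "finite (verts (hcopy v H))" using fH by (simp add: hcopy_def verts_def)
    then have "finite (verts (HS v))" by (simp add: HS_def)
    then show ?thesis by (rule finite_components)
  qed
  have finL: "finite (L \<inter> S0)" using fG LG finite_subset by blast
  have HSsub: "B \<subseteq> verts (hcopy v H)" if "B \<in> components (HS v)" for B v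
    using components_sub[OF that] by (auto simp: HS_def)
  have blkInl: "{u. Inl u \<in> blk C} = C" for C by (auto simp: blk_def)
  have inj: "inj_on blk (components GS)"
    by (rule inj_onI) (metis blkInl)
  have c1: "card P1 = card (components GS)" unfolding P1_def using inj by (rule card_image)
  have c2: "card P2 = (\<Sum>v\<in>L \<inter> S0. card (components (HS v)))"
    unfolding P2_def
  proof (rule card_UN_disjoint[OF finL])
    show "\<forall>i\<in>L \<inter> S0. finite (components (HS i))" using finHS by blast
    show "\<forall>i\<in>L \<inter> S0. \<forall>j\<in>L \<inter> S0. i \<noteq> j \<longrightarrow> components (HS i) \<inter> components (HS j) = {}"
    proof (intro ballI impI)
      fix i j :: 'a assume "i \<noteq> j"
      show "components (HS i) \<inter> components (HS j) = {}"
      proof (rule ccontr)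
        assume "components (HS i) \<inter> components (HS j) \<noteq> {}"
        then obtain B where B: "B \<in> components (HS i)" "B \<in> components (HS j)" by blast
        then obtain x where x: "x \<in> B" using components_ne by blast
        have "x \<in> verts (hcopy i H)" "x \<in> verts (hcopy j H)" using HSsub B x by blast+
        then show False using \<open>i \<noteq> j\<close> by (rule_tac sumprod_cases[of x]) auto
      qed
    qed
  qed
  have disj: "P1 \<inter> P2 = {}"
  proof (rule ccontr)
    assume "P1 \<inter> P2 \<noteq> {}"
    then obtain C v where C: "C \<in> components GS" "v \<in> L \<inter> S0" "blk C \<in> components (HS v)"
      unfolding P1_def P2_def by blast
    then obtain r where "r \<in> C" using components_ne by blast
    then have "Inl r \<in> blk C" by (simp add: blk_def)
    then show False using HSsub[OF C(3)] by auto
  qed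
  have finP2: "finite P2" unfolding P2_def using finL finHS by blast
  have finP1: "finite P1" unfolding P1_def using finGS by blast
  have "omega D = omega GS + (\<Sum>v\<in>L \<inter> S0. omega (HS v))"
    unfolding omega_def comps using c1 c2 disj finP1 finP2 by (simp add: card_Un_disjoint)
  then show ?thesis by (simp add: D_def K_def GS_def S0_def HS_def)
qed




lemma components_Union: "\<Union>(components G) = verts G"
proof (rule equalityI)
  show "\<Union>(components G) \<subseteq> verts G" using components_sub by blast
  show "verts G \<subseteq> \<Union>(components G)"
  proof (rule subsetI)
    fix x assume "x \<in> verts G"
    then obtain C where "C \<in> components G" "x \<in> C" by (meson components_cover)
    then show "x \<in> \<Union>(components G)" by blast
  qed
qed

lemma components_reach:
  assumes "sym (edges G)" "C \<in> components G" "x \<in> C"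
  shows "C = {y \<in> verts G. (x, y) \<in> (edges G)\<^sup>*}"
proof -
  obtain r where r: "r \<in> verts G" "C = {y \<in> verts G. (r, y) \<in> (edges G)\<^sup>*}"
    using assms(2) by (auto simp: components_def)
  then have rx: "(r,x) \<in> (edges G)\<^sup>*" using assms by auto
  then have xr: "(x,r) \<in> (edges G)\<^sup>*" using sym_rtr[OF assms(1)] by blast
  show ?thesis unfolding r(2) using rx xr by (meson rtrancl_trans)
qed

lemma components_disj:
  assumes "sym (edges G)" "C1 \<in> components G" "C2 \<in> components G" "x \<in> C1" "x \<in> C2"
  shows "C1 = C2"
  using components_reach[OF assms(1,2,4)] components_reach[OF assms(1,3,5)] by simp

lemma omega_add_isolated:
  assumes sG: "simple_graph G" and vA: "v \<in> A" and vV: "v \<in> verts G" and nb: "neighbours G v \<subseteq> A"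
  shows "omega (delete G (A - {v})) = Suc (omega (delete G A))"
proof -
  define GA where "GA = delete G A"
  define GV where "GV = delete G (A - {v})"
  have symE: "sym (edges G)" and fG: "finite (verts G)" using sG by (auto simp: simple_graph_def)
  have symGA: "sym (edges GA)" unfolding GA_def by (rule sym_delete[OF symE])
  have sub: "edges GA \<subseteq> edges GV" by (auto simp: GA_def GV_def)
  have compsub: "C \<subseteq> verts G - A" if "C \<in> components GA" for C
    using components_sub[OF that] by (simp add: GA_def)
  have comps: "components GV = insert {v} (components GA)"
  proof (rule components_eqI)
    show "\<Union>(insert {v} (components GA)) = verts GV"
      using components_Union[of GA] vA vV by (auto simp: GA_def GV_def)
    show "\<forall>B\<in>insert {v} (components GA). B \<noteq> {}" using components_ne by blast
    show "\<forall>B\<in>insert {v} (components GA). \<forall>x\<in>B. \<forall>y\<in>B. (x, y) \<in> (edges GV)\<^sup>*"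
    proof (intro ballI)
      fix B x y assume B: "B \<in> insert {v} (components GA)" and x: "x \<in> B" and y: "y \<in> B"
      show "(x, y) \<in> (edges GV)\<^sup>*"
      proof (cases "B = {v}")
        case True then show ?thesis using x y by simp
      next
        case False
        then have "B \<in> components GA" using B by simp
        then have "(x,y) \<in> (edges GA)\<^sup>*" using components_conn[OF symGA _ x y] by simp
        then show ?thesis by (meson rtrancl_mono sub subsetD)
      qed
    qed
    show "\<forall>B\<in>insert {v} (components GA). \<forall>x\<in>B. \<forall>y. (x, y) \<in> edges GV \<longrightarrow> y \<in> B"
    proof (intro ballI allI impI)
      fix B x y assume B: "B \<in> insert {v} (components GA)" and x: "x \<in> B" and xy: "(x,y) \<in> edges GV"
      show "y \<in> B"
      proof (cases "B = {v}")
        case True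
        then have "x = v" using x by simp
        then have "y \<in> neighbours G v" using xy by (simp add: GV_def neighbours_def)
        then have "y \<in> A" using nb by blast
        then show ?thesis using xy True by (auto simp: GV_def)
      next
        case False
        then have BC: "B \<in> components GA" using B by simp
        have xA: "x \<in> verts G - A" using compsub[OF BC] x by blast
        have "y \<noteq> v"
        proof
          assume "y = v"
          then have "(v,x) \<in> edges G" using xy symE by (auto simp: GV_def dest: symD)
          then show False using nb xA by (auto simp: neighbours_def)
        qed
        then have "(x,y) \<in> edges GA" "y \<in> verts GA" using xy xA by (auto simp: GV_def GA_def)
        then show ?thesis using components_closed[OF BC x] by blast
      qed
    qed
  qed
  have fin: "finite (components GA)" using fG by (intro finite_components) (simp add: GA_def)
  have "{v} \<notin> components GA" using compsub vA by blast
  then show ?thesis unfolding GA_def[symmetric] GV_def[symmetric] omega_def comps using fin by simp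
qed

lemma omega_add_clique:
  assumes sG: "simple_graph G" and vA: "v \<in> A" and vV: "v \<in> verts G"
    and cl: "\<forall>a\<in>neighbours G v - A. \<forall>b\<in>neighbours G v - A. a \<noteq> b \<longrightarrow> (a,b) \<in> edges G"
  shows "omega (delete G A) \<le> omega (delete G (A - {v}))"
proof (cases "neighbours G v \<subseteq> A")
  case True
  then show ?thesis using omega_add_isolated[OF sG vA vV] by simp
next
  case False
  then obtain u where u: "u \<in> neighbours G v" "u \<notin> A" by blast
  define GA where "GA = delete G A"
  define GV where "GV = delete G (A - {v})"
  have symE: "sym (edges G)" and fG: "finite (verts G)" and EG: "edges G \<subseteq> verts G \<times> verts G"
    using sG by (auto simp: simple_graph_def)
  have symGA: "sym (edges GA)" unfolding GA_def by (rule sym_delete[OF symE])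
  have symGV: "sym (edges GV)" unfolding GV_def by (rule sym_delete[OF symE])
  have sub: "edges GA \<subseteq> edges GV" by (auto simp: GA_def GV_def)
  have compsub: "C \<subseteq> verts G - A" if "C \<in> components GA" for C
    using components_sub[OF that] by (simp add: GA_def)
  have uV: "u \<in> verts GA" using u EG by (auto simp: neighbours_def GA_def)
  then obtain C0 where C0: "C0 \<in> components GA" "u \<in> C0" by (meson components_cover)
  have inC0: "y \<in> C0" if "y \<in> neighbours G v" "y \<notin> A" for y
  proof (cases "y = u")
    case True then show ?thesis using C0 by simp
  next
    case False
    have nu: "u \<in> neighbours G v - A" and ny: "y \<in> neighbours G v - A" using u that by auto
    have uy: "(u,y) \<in> edges G" using cl[rule_format, OF nu ny] False by auto
    have yV: "y \<in> verts G" using that EG by (auto simp: neighbours_def)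
    have yGA: "y \<in> verts GA" using yV that(2) by (simp add: GA_def)
    have "(u,y) \<in> edges GA" using uy yGA uV by (simp add: GA_def)
    then show ?thesis using components_closed[OF C0(1) C0(2) _ yGA] by blast
  qed
  define P where "P = insert (insert v C0) (components GA - {C0})"
  have comps: "components GV = P"
  proof (rule components_eqI)
    have "\<Union>P = insert v (\<Union>(components GA))" unfolding P_def using C0(1) by blast
    also have "\<dots> = verts GV" unfolding components_Union using vA vV by (auto simp: GA_def GV_def)
    finally show "\<Union>P = verts GV" .
    show "\<forall>B\<in>P. B \<noteq> {}" unfolding P_def using components_ne by blast
    show "\<forall>B\<in>P. \<forall>x\<in>B. \<forall>y\<in>B. (x, y) \<in> (edges GV)\<^sup>*"
    proof (intro ballI)
      fix B x y assume B: "B \<in> P" and x: "x \<in> B" and y: "y \<in> B"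
      show "(x, y) \<in> (edges GV)\<^sup>*"
      proof (cases "B = insert v C0")
        case True
        have "\<forall>z\<in>B. (v,z) \<in> (edges GV)\<^sup>*"
        proof
          fix z assume "z \<in> B"
          then consider "z = v" | "z \<in> C0" using True by blast
          then show "(v,z) \<in> (edges GV)\<^sup>*"
          proof cases
            case 1 then show ?thesis by simp
          next
            case 2
            have "(u,z) \<in> (edges GA)\<^sup>*" using components_conn[OF symGA C0(1) C0(2) 2] .
            then have "(u,z) \<in> (edges GV)\<^sup>*" by (meson rtrancl_mono sub subsetD)
            moreover have "(v,u) \<in> edges GV" using u uV vA vV by (auto simp: GV_def GA_def neighbours_def)
            ultimately show ?thesis by (meson converse_rtrancl_into_rtrancl)
          qed
        qed
        then show ?thesis using root_conn[OF symGV] x y by blast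
      next
        case False
        then have "B \<in> components GA" using B by (simp add: P_def)
        then have "(x,y) \<in> (edges GA)\<^sup>*" using components_conn[OF symGA _ x y] by simp
        then show ?thesis by (meson rtrancl_mono sub subsetD)
      qed
    qed
    show "\<forall>B\<in>P. \<forall>x\<in>B. \<forall>y. (x, y) \<in> edges GV \<longrightarrow> y \<in> B"
    proof (intro ballI allI impI)
      fix B x y assume B: "B \<in> P" and x: "x \<in> B" and xy: "(x,y) \<in> edges GV"
      have yV: "y \<in> verts G - (A - {v})" using xy by (auto simp: GV_def)
      have xV: "x \<in> verts G - (A - {v})" using xy by (auto simp: GV_def)
      have gen: "y \<in> C" if "C \<in> components GA" "x \<in> C" "y \<noteq> v" for C
      proof -
        have "x \<notin> A" using compsub[OF that(1)] that(2) by blast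
        then have "(x,y) \<in> edges GA" "y \<in> verts GA" using xy yV that(3) xV by (auto simp: GV_def GA_def)
        then show ?thesis using components_closed[OF that(1,2)] by blast
      qed
      show "y \<in> B"
      proof (cases "B = insert v C0")
        case True
        show ?thesis
        proof (cases "y = v")
          case True then show ?thesis using \<open>B = insert v C0\<close> by simp
        next
          case yv: False
          show ?thesis
          proof (cases "x = v")
            case True
            then have "y \<in> neighbours G v" "y \<notin> A" using xy yV yv by (auto simp: GV_def neighbours_def)
            then show ?thesis using inC0 \<open>B = insert v C0\<close> by blast
          next
            case False
            then have "x \<in> C0" using x \<open>B = insert v C0\<close> by blast
            then show ?thesis using gen[OF C0(1) _ yv] \<open>B = insert v C0\<close> by blast
          qed
        qed
      next
        case False
        then have BC: "B \<in> components GA" "B \<noteq> C0" using B by (auto simp: P_def)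
        have xA: "x \<notin> A" using compsub[OF BC(1)] x by blast
        show ?thesis
        proof (cases "y = v")
          case True
          then have "(v,x) \<in> edges G" using xy symE by (auto simp: GV_def dest: symD)
          then have "x \<in> C0" using inC0 xA by (simp add: neighbours_def)
          then have "B = C0" using components_disj[OF symGA BC(1) C0(1) x] by simp
          then show ?thesis using BC by simp
        next
          case False
          then show ?thesis using gen[OF BC(1) x] by blast
        qed
      qed
    qed
  qed
  have fin: "finite (components GA)" using fG by (intro finite_components) (simp add: GA_def)
  have "insert v C0 \<notin> components GA - {C0}" using compsub vA by blast
  moreover have "card (components GA) > 0" using fin C0(1) card_gt_0_iff by blast
  ultimately have "card P = card (components GA)"
    unfolding P_def using fin C0(1) by simp
  then show ?thesis unfolding GA_def[symmetric] GV_def[symmetric] omega_def comps by simp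
qed

lemma simplicial_nbrs:
  assumes sG: "simple_graph G" and s: "simplicial G v"
    and a: "a \<in> neighbours G v" and b: "b \<in> neighbours G v" and ab: "a \<noteq> b"
  shows "(a,b) \<in> edges G"
proof -
  have symE: "sym (edges G)" and fG: "finite (verts G)" and EG: "edges G \<subseteq> verts G \<times> verts G"
    and irr: "irrefl (edges G)"
    using sG by (auto simp: simple_graph_def)
  have ext: "\<exists>C. is_max_clique G C \<and> v \<in> C \<and> x \<in> C" if x: "x \<in> neighbours G v" for x
  proof -
    have vx: "(v,x) \<in> edges G" using x by (simp add: neighbours_def)
    then have "(x,v) \<in> edges G" using symE by (simp add: symD)
    moreover have "v \<noteq> x" using vx irr by (auto simp: irrefl_def)
    ultimately have cl: "is_clique G {v,x}" using vx EG by (auto simp: is_clique_def)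
    have bound: "\<forall>D. is_clique G D \<and> {v,x} \<subseteq> D \<longrightarrow> card D < Suc (card (verts G))"
    proof (intro allI impI)
      fix D assume "is_clique G D \<and> {v,x} \<subseteq> D"
      then have "D \<subseteq> verts G" by (simp add: is_clique_def)
      then have "card D \<le> card (verts G)" using fG by (rule card_mono[rotated])
      then show "card D < Suc (card (verts G))" by simp
    qed
    have "\<exists>D. (is_clique G D \<and> {v,x} \<subseteq> D) \<and> (\<forall>D'. is_clique G D' \<and> {v,x} \<subseteq> D' \<longrightarrow> card D' \<le> card D)"
      using ex_has_greatest_nat[of "\<lambda>D. is_clique G D \<and> {v,x} \<subseteq> D" "{v,x}" card, OF _ bound] cl by simp
    then obtain D where D: "is_clique G D" "{v,x} \<subseteq> D"
      and mx: "\<forall>D'. is_clique G D' \<and> {v,x} \<subseteq> D' \<longrightarrow> card D' \<le> card D"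
      by blast
    have "is_max_clique G D"
      unfolding is_max_clique_def
    proof (intro conjI allI impI)
      show "is_clique G D" by fact
      fix D' assume D': "is_clique G D' \<and> D \<subseteq> D'"
      then have "card D' \<le> card D" using mx D by blast
      moreover have "finite D'" using D' fG by (auto simp: is_clique_def intro: finite_subset)
      ultimately show "D' = D" using D' card_subset_eq by (metis card_mono dual_order.antisym)
    qed
    then show ?thesis using D by blast
  qed
  obtain Ca where Ca: "is_max_clique G Ca" "v \<in> Ca" "a \<in> Ca" using ext[OF a] by blast
  obtain Cb where Cb: "is_max_clique G Cb" "v \<in> Cb" "b \<in> Cb" using ext[OF b] by blast
  have ex: "\<exists>!C. is_max_clique G C \<and> v \<in> C" using s by (simp add: simplicial_def)
  have "Ca = Cb" using ex1_implies_ex[OF ex] ex Ca(1,2) Cb(1,2) by (metis)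
  then have "a \<in> Cb" "is_clique G Cb" using Ca(3) Cb(1) by (simp_all add: is_max_clique_def)
  then show ?thesis using Cb(3) ab unfolding is_clique_def by blast
qed

lemma omega_connected:
  assumes "simple_graph G" "connected_graph G"
  shows "omega (delete G {}) = 1"
  using assms by (simp add: delete_empty connected_graph_def)

lemma omega_hcopy:
  assumes sH: "simple_graph H" and cH: "connected_graph H"
  shows "omega (delete (hcopy v H) {}) = 1"
proof -
  have symE: "sym (edges H)" and EH: "edges H \<subseteq> verts H \<times> verts H"
    using sH by (auto simp: simple_graph_def)
  have ne: "verts H \<noteq> {}" and o: "card (components H) = 1" using cH by (auto simp: connected_graph_def omega_def)
  then obtain C where C: "components H = {C}" by (meson card_1_singletonE)
  have conn: "(w,w') \<in> (edges H)\<^sup>*" if "w \<in> verts H" "w' \<in> verts H" for w w'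
  proof -
    have "w \<in> C" "w' \<in> C" using components_cover[OF that(1)] components_cover[OF that(2)] C by auto
    then show ?thesis using components_conn[OF symE] C by simp
  qed
  define K where "K = delete (hcopy v H) {}"
  have vK: "verts K = verts (hcopy v H)" by (simp add: K_def)
  have comps: "components K = {verts (hcopy v H)}"
  proof (rule components_eqI)
    show "\<Union>{verts (hcopy v H)} = verts K" using vK by simp
    show "\<forall>B\<in>{verts (hcopy v H)}. B \<noteq> {}" using ne by (auto simp: hcopy_def verts_def)
    show "\<forall>B\<in>{verts (hcopy v H)}. \<forall>x\<in>B. \<forall>y\<in>B. (x, y) \<in> (edges K)\<^sup>*"
    proof (intro ballI)
      fix B x y assume "B \<in> {verts (hcopy v H)}" "x \<in> B" "y \<in> B"
      then obtain w w' where w: "x = Inr (v,w)" "y = Inr (v,w')" "w \<in> verts H" "w' \<in> verts H"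
        by (auto simp: hcopy_def verts_def)
      have "(Inr (v,w), Inr (v,w')) \<in> (edges K)\<^sup>*"
      proof (rule rtr_map[of w w' "edges H" "\<lambda>w. Inr (v,w)"])
        show "(w,w') \<in> (edges H)\<^sup>*" using conn w by blast
        show "\<forall>p q. (p, q) \<in> edges H \<longrightarrow> (Inr (v, p), Inr (v, q)) \<in> edges K"
          using EH by (auto simp: K_def)
      qed
      then show "(x, y) \<in> (edges K)\<^sup>*" using w by simp
    qed
    show "\<forall>B\<in>{verts (hcopy v H)}. \<forall>x\<in>B. \<forall>y. (x, y) \<in> edges K \<longrightarrow> y \<in> B"
      by (auto simp: K_def)
  qed
  show ?thesis unfolding K_def[symmetric] omega_def comps by simp
qed




theorem proposition3p1:
  fixes G :: "'a graph" and H :: "'b graph" and L :: "'a set"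
    and T :: "('a + 'a \<times> 'b) set"
  assumes "simple_graph G" and "simple_graph H"
    and "connected_graph G" and "connected_graph H"
    and "L \<noteq> {}" and "L \<subset> verts G"
    and "T \<noteq> {}" and "is_cutset (corona G L H) T"
  defines "T0 \<equiv> {u \<in> verts G. Inl u \<in> T}"
    and "Tv \<equiv> (\<lambda>v. T \<inter> verts (hcopy v H))"
    and "N \<equiv> {v \<in> L. T \<inter> verts (hcopy v H) \<noteq> {}}"
  shows "({} \<noteq> T0 \<and> T0 \<subset> verts G)
    \<and> (\<forall>v \<in> L - T0. Tv v = {})
    \<and> (\<forall>v \<in> L \<inter> T0. Tv v = {} \<or> is_cutset (hcopy v H) (Tv v))
    \<and> (\<forall>v \<in> L \<inter> T0. neighbours G v \<subseteq> T0 \<longrightarrow> Tv v \<noteq> {})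
    \<and> int (omega (delete (corona G L H) T)) =
        int (omega (delete G T0)) + (\<Sum>v\<in>N. int (omega (delete (hcopy v H) (Tv v))))
        + int (card (T0 \<inter> L)) - int (card N)
    \<and> (\<forall>v \<in> T0. simplicial G v \<longrightarrow> v \<in> L)
    \<and> (T0 \<inter> L = {} \<longrightarrow>
         T = Inl ` T0 \<and> is_cutset G T0 \<and> (\<forall>v \<in> T0. \<not> simplicial G v))"
proof -
  note sG = assms(1) and sH = assms(2) and cG = assms(3) and cH = assms(4)
  define K where "K = corona G L H"
  define S0 where "S0 = (\<lambda>S :: ('a + 'a \<times> 'b) set. {u \<in> verts G. Inl u \<in> S})"
  define g where "g = (\<lambda>(S :: ('a + 'a \<times> 'b) set) (v::'a). omega (delete (hcopy v H) (S \<inter> verts (hcopy v H))))"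
  have LG: "L \<subseteq> verts G" using assms(6) by blast
  obtain u0 where u0: "u0 \<in> verts G" "u0 \<notin> L" using assms(6) by blast
  have symE: "sym (edges G)" and fG: "finite (verts G)" and EG: "edges G \<subseteq> verts G \<times> verts G"
    using sG by (auto simp: simple_graph_def)
  have finL: "finite L" using fG LG finite_subset by blast
  have oc: "omega (delete K S) = omega (delete G (S0 S)) + (\<Sum>v\<in>L \<inter> S0 S. g S v)" for S
    unfolding K_def S0_def g_def by (rule omega_corona[OF sG sH LG])
  have TK: "T \<subseteq> verts K" using assms(8) by (simp add: is_cutset_def K_def)
  have cut: "omega (delete K (T - {x})) < omega (delete K T)" if "x \<in> T" for x
    using assms(7,8) that by (simp add: is_cutset_def K_def)
  have T0S: "S0 T = T0" by (simp add: S0_def T0_def)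
  have gT: "g T v = omega (delete (hcopy v H) (Tv v))" for v by (simp add: g_def Tv_def)
  have S0l: "S0 (T - {Inl u}) = T0 - {u}" for u by (auto simp: S0_def T0_def)
  have S0r: "S0 (T - {Inr p}) = T0" for p by (auto simp: S0_def T0_def)
  have gl: "g (T - {Inl u}) = g T" for u
  proof -
    have "(T - {Inl u}) \<inter> verts (hcopy v H) = T \<inter> verts (hcopy v H)" for v by auto
    then show ?thesis by (simp add: g_def)
  qed
  have gr: "g (T - {Inr (v,w)}) v' = g T v'" if "v' \<noteq> v" for v v' w
  proof -
    have "(T - {Inr (v,w)}) \<inter> verts (hcopy v' H) = T \<inter> verts (hcopy v' H)" using that by auto
    then show ?thesis by (simp add: g_def)
  qed
  have grv: "g (T - {x}) v = omega (delete (hcopy v H) (Tv v - {x}))" for x v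
  proof -
    have "(T - {x}) \<inter> verts (hcopy v H) = Tv v - {x}" by (auto simp: Tv_def)
    then show ?thesis by (simp add: g_def)
  qed
  have finLT: "finite (L \<inter> T0)" using finL by simp
  have cutG: "omega (delete G (T0 - {u})) < omega (delete G T0)" if "u \<in> T0" "u \<notin> L" for u
  proof -
    have "Inl u \<in> T" using that by (simp add: T0_def)
    from cut[OF this] have "omega (delete G (T0 - {u})) + (\<Sum>v\<in>L \<inter> (T0 - {u}). g T v)
       < omega (delete G T0) + (\<Sum>v\<in>L \<inter> T0. g T v)"
      unfolding oc S0l gl T0S .
    moreover have "L \<inter> (T0 - {u}) = L \<inter> T0" using that by blast
    ultimately show ?thesis by simp
  qed
  have cutH: "omega (delete G T0) + (\<Sum>v'\<in>L \<inter> T0. g (T - {Inr (v,w)}) v') < omega (delete G T0) + (\<Sum>v'\<in>L \<inter> T0. g T v')"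
    if "Inr (v,w) \<in> T" for v w
    using cut[OF that] unfolding oc S0r T0S .
  have p1a: "T0 \<noteq> {}"
  proof
    assume e: "T0 = {}"
    obtain x where x: "x \<in> T" using assms(7) by blast
    show False
    proof (rule sumprod_cases[of x])
      fix u assume "x = Inl u"
      then have "u \<in> T0" using x TK by (auto simp: T0_def K_def)
      then show False using e by simp
    next
      fix v w assume "x = Inr (v,w)"
      then show False using cutH[of v w] x e by simp
    qed
  qed
  have p1b: "T0 \<subset> verts G"
  proof -
    have sub: "T0 \<subseteq> verts G" by (auto simp: T0_def)
    have "T0 \<noteq> verts G"
    proof
      assume e: "T0 = verts G"
      have "neighbours G u0 \<subseteq> verts G" using EG by (auto simp: neighbours_def)
      then have "omega (delete G (T0 - {u0})) = Suc (omega (delete G T0))"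
        using omega_add_isolated[OF sG _ u0(1)] e u0 by simp
      moreover have "omega (delete G (T0 - {u0})) < omega (delete G T0)" using cutG e u0 by simp
      ultimately show False by simp
    qed
    then show ?thesis using sub by blast
  qed
  have p2: "\<forall>v \<in> L - T0. Tv v = {}"
  proof
    fix v assume v: "v \<in> L - T0"
    show "Tv v = {}"
    proof (rule ccontr)
      assume "Tv v \<noteq> {}"
      then obtain w where w: "Inr (v,w) \<in> T" by (auto simp: Tv_def hcopy_def verts_def)
      have "(\<Sum>v'\<in>L \<inter> T0. g (T - {Inr (v,w)}) v') = (\<Sum>v'\<in>L \<inter> T0. g T v')"
        by (rule sum.cong) (use v in \<open>auto intro!: gr\<close>)
      then show False using cutH[OF w] by simp
    qed
  qed
  have sumsplit: "(\<Sum>v'\<in>L \<inter> T0. f v') = f v + (\<Sum>v'\<in>L \<inter> T0 - {v}. f v')" if "v \<in> L \<inter> T0" for f :: "'a \<Rightarrow> nat" and v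
    using sum.remove[OF finLT that] .
  have p3: "\<forall>v \<in> L \<inter> T0. Tv v = {} \<or> is_cutset (hcopy v H) (Tv v)"
  proof
    fix v assume v: "v \<in> L \<inter> T0"
    have "is_cutset (hcopy v H) (Tv v)" unfolding is_cutset_def
    proof (intro conjI disjI2 ballI)
      show "Tv v \<subseteq> verts (hcopy v H)" by (simp add: Tv_def)
      fix x assume x: "x \<in> Tv v"
      then obtain w where xw: "x = Inr (v,w)" "x \<in> T" by (auto simp: Tv_def hcopy_def verts_def)
      have eq: "(\<Sum>v'\<in>L \<inter> T0 - {v}. g (T - {x}) v') = (\<Sum>v'\<in>L \<inter> T0 - {v}. g T v')"
        by (rule sum.cong) (use xw in \<open>auto intro!: gr\<close>)
      have "g (T - {x}) v < g T v"
        using cutH[of v w] xw sumsplit[OF v, of "g (T - {x})"] sumsplit[OF v, of "g T"] eq by simp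
      then show "omega (delete (hcopy v H) (Tv v - {x})) < omega (delete (hcopy v H) (Tv v))"
        by (simp add: grv gT)
    qed
    then show "Tv v = {} \<or> is_cutset (hcopy v H) (Tv v)" by blast
  qed
  have ghc: "g T v = 1" if "Tv v = {}" for v
    using that omega_hcopy[OF sH cH, of v] by (simp add: gT)
  have p4: "\<forall>v \<in> L \<inter> T0. neighbours G v \<subseteq> T0 \<longrightarrow> Tv v \<noteq> {}"
  proof (intro ballI impI notI)
    fix v assume v: "v \<in> L \<inter> T0" and nb: "neighbours G v \<subseteq> T0" and e: "Tv v = {}"
    have vV: "v \<in> verts G" using v by (simp add: T0_def)
    have "Inl v \<in> T" using v by (simp add: T0_def)
    from cut[OF this] have "omega (delete G (T0 - {v})) + (\<Sum>v'\<in>L \<inter> (T0 - {v}). g T v')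
       < omega (delete G T0) + (\<Sum>v'\<in>L \<inter> T0. g T v')"
      unfolding oc S0l gl T0S .
    moreover have "L \<inter> (T0 - {v}) = L \<inter> T0 - {v}" by blast
    moreover have "omega (delete G (T0 - {v})) = Suc (omega (delete G T0))"
      using omega_add_isolated[OF sG _ vV nb] v by simp
    ultimately show False using sumsplit[OF v, of "g T"] ghc[OF e] by simp
  qed
  have NLT: "N \<subseteq> L \<inter> T0" using p2 by (auto simp: N_def Tv_def)
  have p5: "int (omega (delete (corona G L H) T)) =
        int (omega (delete G T0)) + (\<Sum>v\<in>N. int (omega (delete (hcopy v H) (Tv v))))
        + int (card (T0 \<inter> L)) - int (card N)"
  proof -
    have finN: "finite N" using NLT finLT finite_subset by blast
    have "(\<Sum>v\<in>L \<inter> T0. g T v) = (\<Sum>v\<in>N. g T v) + (\<Sum>v\<in>L \<inter> T0 - N. g T v)"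
      using sum.subset_diff[OF NLT finLT, of "g T"] by simp
    also have "(\<Sum>v\<in>L \<inter> T0 - N. g T v) = (\<Sum>v\<in>L \<inter> T0 - N. 1)"
      by (rule sum.cong) (use ghc[unfolded Tv_def] in \<open>auto simp: N_def\<close>)
    also have "\<dots> = card (L \<inter> T0) - card N" using card_Diff_subset[OF finN NLT] by simp
    finally have s: "(\<Sum>v\<in>L \<inter> T0. g T v) = (\<Sum>v\<in>N. g T v) + (card (L \<inter> T0) - card N)" .
    have le: "card N \<le> card (L \<inter> T0)" using card_mono[OF finLT NLT] .
    have "omega (delete K T) = omega (delete G T0) + (\<Sum>v\<in>N. g T v) + (card (L \<inter> T0) - card N)"
      using oc[of T] s unfolding T0S by simp
    then have "int (omega (delete K T)) = int (omega (delete G T0)) + (\<Sum>v\<in>N. int (g T v)) + int (card (L \<inter> T0)) - int (card N)"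
      using le by (simp add: of_nat_diff)
    then show ?thesis by (simp add: K_def gT Int_commute)
  qed
  have p6: "\<forall>v \<in> T0. simplicial G v \<longrightarrow> v \<in> L"
  proof (intro ballI impI)
    fix v assume v: "v \<in> T0" and s: "simplicial G v"
    show "v \<in> L"
    proof (rule ccontr)
      assume vL: "v \<notin> L"
      have vV: "v \<in> verts G" using v by (simp add: T0_def)
      have "omega (delete G T0) \<le> omega (delete G (T0 - {v}))"
        by (rule omega_add_clique[OF sG v vV]) (use simplicial_nbrs[OF sG s] in blast)
      then show False using cutG[OF v vL] by simp
    qed
  qed
  have p7: "T0 \<inter> L = {} \<longrightarrow> T = Inl ` T0 \<and> is_cutset G T0 \<and> (\<forall>v \<in> T0. \<not> simplicial G v)"
  proof
    assume e: "T0 \<inter> L = {}"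
    have "T = Inl ` T0"
    proof (rule equalityI)
      show "T \<subseteq> Inl ` T0"
      proof (rule subsetI)
        fix x assume x: "x \<in> T"
        show "x \<in> Inl ` T0"
        proof (rule sumprod_cases[of x])
          fix u assume "x = Inl u"
          then show ?thesis using x TK by (auto simp: T0_def K_def)
        next
          fix v w assume xv: "x = Inr (v,w)"
          then have "v \<in> L" "w \<in> verts H" using x TK by (auto simp: K_def)
          moreover have "v \<notin> T0" using e \<open>v \<in> L\<close> by blast
          ultimately have "Tv v = {}" using p2 by blast
          moreover have "x \<in> Tv v" using x xv \<open>w \<in> verts H\<close> by (simp add: Tv_def)
          ultimately show ?thesis by simp
        qed
      qed
      show "Inl ` T0 \<subseteq> T" by (auto simp: T0_def)
    qed
    moreover have "is_cutset G T0"
      unfolding is_cutset_def using cutG e by (auto simp: T0_def)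
    moreover have "\<forall>v \<in> T0. \<not> simplicial G v" using p6 e by blast
    ultimately show "T = Inl ` T0 \<and> is_cutset G T0 \<and> (\<forall>v \<in> T0. \<not> simplicial G v)" by blast
  qed
  show ?thesis using p1a p1b p2 p3 p4 p5 p6 p7 by blast
qed


end
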